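(* Let $\mathcal{A},\widetilde{\mathcal{A}}$ be finite alphabets, $\pi:\mathcal{A}\to\widetilde{\mathcal{A}}$ a map, $D\geq1$, $\mathcal{F}\subseteq\mathcal{A}^{[\![1,D]\!]^2}$, $R\geq D$, and $M\subseteq\mathcal{A}^{[\![1,R]\!]^2}$ the set of locally $\mathcal{F}$-admissible patterns of size $R$. Assume that every $w\in M$ is vertically aligned after projection: $\pi(w(i,j))=\pi(w(i,j'))$ for all $i,j,j'\in[\![1,R]\!]$. Let $\mu$ be an ergodic shift-invariant probability measure with $\mu(\Sigma^2(\mathcal{A})\setminus[M])\leq\epsilon$ for some $\epsilon\in[0,1/2]$. Let $\widetilde{\mathcal{G}}=\{\widetilde G_a:a\in\widetilde{\mathcal{A}}\}$ with $\widetilde G_a=\{x:\pi(x(0))=a\}$ and $\mathcal{U}=\{[M],\Sigma^2(\mathcal{A})\setminus[M]\}$. Then (1) $\limsup_{n\to\infty}\frac{1}{n^2}H\big(\mathcal{U}^{[\![0,n-R]\!]^2},\mu\big)\leq H(\epsilon)$; (2) $\limsup_{n\to\infty}\frac{1}{n^2}H\big(\widetilde{\mathcal{G}}^{[\![1,n]\!]^2}\mid\mathcal{U}^{[\![0,n-R]\!]^2},\mu\big)\leq\big(\frac{8}{R}+\epsilon\big)\ln(\mathrm{card}(\widetilde{\mathcal{A}}))$, where $H(\epsilon)=-\epsilon\ln\epsilon-(1-\epsilon)\ln(1-\epsilon)$ (with $H(0)=0$).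
   Context: A pattern $w\in\mathcal{A}^{[\![1,R]\!]^2}$ is locally $\mathcal{F}$-admissible if $(\sigma^u w)|_{[\![1,D]\!]^2}\notin\mathcal{F}$ for all $u\in[\![0,R-D]\!]^2$, where $\sigma^u(w)(v)=w(u+v)$. $[M]=\{x\in\mathcal{A}^{\mathbb{Z}^2}:x|_{[\![1,R]\!]^2}\in M\}$. For a partition $\mathcal{P}$ and finite $S\subseteq\mathbb{Z}^2$, $\mathcal{P}^S=\bigvee_{u\in S}\sigma^{-u}\mathcal{P}$; $H(\mathcal{P},\mu)=-\sum_{P}\mu(P)\ln\mu(P)$ and $H(\mathcal{P}\mid\mathcal{Q},\mu)$ is the conditional entropy. *)

theory Defs
  imports "HOL-Probability.Probability"
begin

type_synonym 'a config = "int \<times> int \<Rightarrow> 'a"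

definition box2 :: "int \<Rightarrow> int \<Rightarrow> (int \<times> int) set" where
  "box2 a b = {a..b} \<times> {a..b}"

definition vadd :: "int \<times> int \<Rightarrow> int \<times> int \<Rightarrow> int \<times> int" where
  "vadd u v = (fst u + fst v, snd u + snd v)"

definition shift :: "int \<times> int \<Rightarrow> 'a config \<Rightarrow> 'a config" where
  "shift u x = (\<lambda>v. x (vadd u v))"

definition full_shift :: "'a config measure" where
  "full_shift = PiM UNIV (\<lambda>_. count_space UNIV)"

definition patterns :: "nat \<Rightarrow> 'a config set" where
  "patterns R = PiE (box2 1 (int R)) (\<lambda>_. UNIV)"

definition locally_admissible :: "'a config set \<Rightarrow> nat \<Rightarrow> nat \<Rightarrow> 'a config \<Rightarrow> bool" where
  "locally_admissible F D R w \<longleftrightarrow> w \<in> patterns R \<and>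
     (\<forall>u \<in> box2 0 (int R - int D). restrict (shift u w) (box2 1 (int D)) \<notin> F)"

definition cyl :: "nat \<Rightarrow> 'a config set \<Rightarrow> 'a config set" where
  "cyl R M = {x. restrict x (box2 1 (int R)) \<in> M}"

definition shift_invariant :: "'a config measure \<Rightarrow> bool" where
  "shift_invariant \<mu> \<longleftrightarrow> (\<forall>u. shift u \<in> \<mu> \<rightarrow>\<^sub>M \<mu> \<and>
      (\<forall>A \<in> sets \<mu>. emeasure \<mu> (shift u -` A \<inter> space \<mu>) = emeasure \<mu> A))"

definition ergodic :: "'a config measure \<Rightarrow> bool" where
  "ergodic \<mu> \<longleftrightarrow> (\<forall>A \<in> sets \<mu>. (\<forall>u. shift u -` A \<inter> space \<mu> = A) \<longrightarrow>
      measure \<mu> A = 0 \<or> measure \<mu> A = 1)"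

text \<open>A finite partition is represented by a labelling function f; its cells are
  the nonempty fibres f^{-1}(y).\<close>
definition part_entropy :: "'x measure \<Rightarrow> ('x \<Rightarrow> 'l) \<Rightarrow> real" where
  "part_entropy \<mu> f = - (\<Sum>y \<in> f ` space \<mu>.
      measure \<mu> (f -` {y} \<inter> space \<mu>) * ln (measure \<mu> (f -` {y} \<inter> space \<mu>)))"

definition cond_part_entropy :: "'x measure \<Rightarrow> ('x \<Rightarrow> 'l) \<Rightarrow> ('x \<Rightarrow> 'k) \<Rightarrow> real" where
  "cond_part_entropy \<mu> f g = - (\<Sum>z \<in> g ` space \<mu>. \<Sum>y \<in> f ` space \<mu>.
      measure \<mu> (f -` {y} \<inter> g -` {z} \<inter> space \<mu>) *
      ln (measure \<mu> (f -` {y} \<inter> g -` {z} \<inter> space \<mu>) / measure \<mu> (g -` {z} \<inter> space \<mu>)))"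

text \<open>Join P^S = join over u in S of sigma^{-u} P: label of x is (f(sigma^u x))_{u in S}.\<close>
definition join_part :: "('a config \<Rightarrow> 'l) \<Rightarrow> (int \<times> int) set \<Rightarrow> 'a config \<Rightarrow> (int \<times> int \<Rightarrow> 'l)" where
  "join_part f S x = restrict (\<lambda>u. f (shift u x)) S"

definition bin_entropy :: "real \<Rightarrow> real" where
  "bin_entropy e = (if e = 0 then 0 else - e * ln e - (1 - e) * ln (1 - e))"

end

theory Submission
  imports Defs
begin

lemma (in prob_space) sum_fibres:
  assumes "finite Y" "\<And>y. y \<in> Y \<Longrightarrow> f -` {y} \<inter> E \<in> events"
  shows "(\<Sum>y\<in>Y. prob (f -` {y} \<inter> E)) = prob (f -` Y \<inter> E)"
proof -
  have "f -` Y \<inter> E = (\<Union>y\<in>Y. f -` {y} \<inter> E)" by auto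
  moreover have "prob (\<Union>y\<in>Y. f -` {y} \<inter> E) = (\<Sum>y\<in>Y. prob (f -` {y} \<inter> E))"
    by (rule finite_measure_finite_Union) (auto simp: assms disjoint_family_on_def)
  ultimately show ?thesis by simp
qed

lemma gibbs:
  fixes p q :: "'y \<Rightarrow> real"
  assumes "finite Y" "\<And>y. y\<in>Y \<Longrightarrow> 0 \<le> p y" "\<And>y. y\<in>Y \<Longrightarrow> 0 \<le> q y"
    "\<And>y. y\<in>Y \<Longrightarrow> 0 < p y \<Longrightarrow> 0 < q y" "sum q Y \<le> sum p Y"
  shows "- (\<Sum>y\<in>Y. p y * ln (p y)) \<le> - (\<Sum>y\<in>Y. p y * ln (q y))"
proof -
  have "p y * ln (q y) - p y * ln (p y) \<le> q y - p y" if "y \<in> Y" for y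
  proof (cases "p y = 0")
    case True then show ?thesis using assms that by simp
  next
    case False
    then have pp: "p y > 0" using assms(2) that by force
    have qp: "q y > 0" using assms(4) that pp by blast
    have "ln (q y / p y) \<le> q y / p y - 1" by (rule ln_le_minus_one) (use pp qp in simp)
    then have "p y * ln (q y / p y) \<le> p y * (q y / p y - 1)" using pp
      by (simp add: mult_left_mono)
    then show ?thesis using pp qp by (simp add: ln_div right_diff_distrib)
  qed
  then have "(\<Sum>y\<in>Y. p y * ln (q y) - p y * ln (p y)) \<le> (\<Sum>y\<in>Y. q y - p y)" by (rule sum_mono)
  then show ?thesis using assms(5) by (simp add: sum_subtractf)
qed

lemma (in prob_space) cond_bound:
  assumes fin_f: "finite (f ` space M)" and fin_g: "finite (g ` space M)"
   and meas: "\<And>y z. f -` {y} \<inter> (g -` {z} \<inter> space M) \<in> events"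
   and measg: "\<And>z. g -` {z} \<inter> space M \<in> events"
  shows "cond_part_entropy M f g \<le> (\<Sum>z\<in>g ` space M. prob (g -` {z} \<inter> space M) *
            ln (card (f ` (g -` {z} \<inter> space M))))"
proof -
  have "- (\<Sum>y\<in>f ` space M. prob (f -` {y} \<inter> (g -` {z} \<inter> space M)) *
          ln (prob (f -` {y} \<inter> (g -` {z} \<inter> space M)) / prob (g -` {z} \<inter> space M)))
        \<le> prob (g -` {z} \<inter> space M) * ln (card (f ` (g -` {z} \<inter> space M)))"
    if z: "z \<in> g ` space M" for z
  proof -
    define E where "E = g -` {z} \<inter> space M"
    define pz where "pz = prob E"
    define Yz where "Yz = f ` E"
    define pp where "pp = (\<lambda>y. prob (f -` {y} \<inter> E))"
    have Ysub: "Yz \<subseteq> f ` space M" unfolding Yz_def E_def by auto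
    have finY: "finite Yz" using Ysub fin_f finite_subset by blast
    have Yne: "Yz \<noteq> {}" using z unfolding Yz_def E_def by auto
    have ppz: "pp y = 0" if "y \<notin> Yz" for y
    proof -
      have "f -` {y} \<inter> E = {}" using that unfolding Yz_def by auto
      then show ?thesis unfolding pp_def by simp
    qed
    have eq1: "(\<Sum>y\<in>f ` space M. pp y * ln (pp y / pz)) = (\<Sum>y\<in>Yz. pp y * ln (pp y / pz))"
      by (rule sum.mono_neutral_right[OF fin_f Ysub]) (auto simp: ppz)
    have sumpp: "(\<Sum>y\<in>Yz. pp y) = pz"
    proof -
      have "(\<Sum>y\<in>Yz. pp y) = prob (f -` Yz \<inter> E)" unfolding pp_def
        by (rule sum_fibres[OF finY]) (simp add: meas E_def)
      also have "f -` Yz \<inter> E = E" unfolding Yz_def by auto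
      finally show ?thesis unfolding pz_def .
    qed
    have pp_le: "pp y \<le> pz" for y unfolding pp_def pz_def
      by (rule finite_measure_mono) (auto simp: E_def measg)
    have ppnn: "0 \<le> pp y" for y unfolding pp_def by simp
    have lnN: "0 \<le> ln (real (card Yz))" using finY Yne by (simp add: Suc_leI card_gt_0_iff)
    show ?thesis
    proof (cases "pz = 0")
      case True
      then have "pp y = 0" for y using pp_le ppnn by (metis order_antisym)
      then show ?thesis using True unfolding E_def[symmetric] pz_def[symmetric] pp_def[symmetric]
        by simp
    next
      case False
      then have pzp: "pz > 0" unfolding pz_def by (simp add: zero_less_measure_iff)
      have Np: "card Yz > 0" using finY Yne by (simp add: card_gt_0_iff)
      have g1: "- (\<Sum>y\<in>Yz. pp y * ln (pp y)) \<le> - (\<Sum>y\<in>Yz. pp y * ln (pz / card Yz))"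
        by (rule gibbs[OF finY]) (use ppnn pzp Np sumpp in auto)
      have g2: "(\<Sum>y\<in>Yz. pp y * ln (pz / card Yz)) = pz * ln pz - pz * ln (card Yz)"
      proof -
        have "(\<Sum>y\<in>Yz. pp y * ln (pz / card Yz)) = (\<Sum>y\<in>Yz. pp y) * ln (pz / card Yz)"
          by (simp add: sum_distrib_right)
        then show ?thesis using sumpp pzp Np by (simp add: ln_div right_diff_distrib)
      qed
      have g3: "(\<Sum>y\<in>Yz. pp y * ln (pp y / pz)) = (\<Sum>y\<in>Yz. pp y * ln (pp y)) - pz * ln pz"
      proof -
        have "pp y * ln (pp y / pz) = pp y * ln (pp y) - pp y * ln pz" for y
        proof (cases "pp y = 0")
          case False then have "pp y > 0" using ppnn[of y] by simp
          then show ?thesis using pzp by (simp add: ln_div right_diff_distrib)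
        qed simp
        then show ?thesis using sumpp by (simp add: sum_subtractf sum_distrib_right[symmetric])
      qed
      have "- (\<Sum>y\<in>f ` space M. pp y * ln (pp y / pz)) \<le> pz * ln (card Yz)"
        using g1 g2 g3 eq1 by linarith
      then show ?thesis by (simp add: pp_def E_def pz_def Yz_def)
    qed
  qed
  then have "(\<Sum>z\<in>g ` space M. - (\<Sum>y\<in>f ` space M. prob (f -` {y} \<inter> (g -` {z} \<inter> space M)) *
          ln (prob (f -` {y} \<inter> (g -` {z} \<inter> space M)) / prob (g -` {z} \<inter> space M))))
        \<le> (\<Sum>z\<in>g ` space M. prob (g -` {z} \<inter> space M) * ln (card (f ` (g -` {z} \<inter> space M))))"
    by (rule sum_mono)
  then show ?thesis unfolding cond_part_entropy_def by (simp add: Int_assoc sum_negf)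
qed

lemma (in prob_space) join_bound:
  fixes \<phi> :: "'i \<Rightarrow> 'a \<Rightarrow> 'l::finite"
  assumes finS: "finite S" and meas: "\<And>A. (\<lambda>x. restrict (\<lambda>u. \<phi> u x) S) -` A \<inter> space M \<in> events"
  shows "part_entropy M (\<lambda>x. restrict (\<lambda>u. \<phi> u x) S) \<le> (\<Sum>u\<in>S. - (\<Sum>v\<in>UNIV.
            prob (\<phi> u -` {v} \<inter> space M) * ln (prob (\<phi> u -` {v} \<inter> space M))))"
proof -
  define F where "F = (\<lambda>x. restrict (\<lambda>u. \<phi> u x) S)"
  define Y where "Y = F ` space M"
  define p where "p = (\<lambda>y. prob (F -` {y} \<inter> space M))"
  define qu where "qu = (\<lambda>u v. prob (\<phi> u -` {v} \<inter> space M))"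
  define q where "q = (\<lambda>y. \<Prod>u\<in>S. qu u (y u))"
  have YPi: "Y \<subseteq> PiE S (\<lambda>_. UNIV)" unfolding Y_def F_def by auto
  have finPi: "finite (PiE S (\<lambda>_. UNIV::'l set))" using finS by (simp add: finite_PiE)
  have finY: "finite Y" using finite_subset[OF YPi finPi] .
  have measF: "F -` A \<inter> space M \<in> events" for A using meas unfolding F_def .
  have measu: "\<phi> u -` {v} \<inter> space M \<in> events" if "u \<in> S" for u v
  proof -
    have "\<phi> u -` {v} \<inter> space M = F -` {y. y u = v} \<inter> space M" using that unfolding F_def by auto
    then show ?thesis using measF[of "{y. y u = v}"] by simp
  qed
  have quSum: "(\<Sum>v\<in>UNIV. qu u v) = 1" if "u\<in>S" for u
    unfolding qu_def using sum_fibres[of UNIV "\<phi> u" "space M"] measu[OF that] by (simp add: prob_space)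
  have p_le: "p y \<le> qu u (y u)" if "u \<in> S" for y u
    unfolding p_def qu_def using that measu by (intro finite_measure_mono) (auto simp: F_def)
  have sumq: "sum q Y \<le> sum p Y"
  proof -
    have "sum q Y \<le> sum q (PiE S (\<lambda>_. UNIV))"
      by (rule sum_mono2[OF finPi YPi]) (auto simp: q_def qu_def intro: prod_nonneg)
    also have "\<dots> = (\<Prod>u\<in>S. \<Sum>v\<in>UNIV. qu u v)" unfolding q_def
      by (rule prod_sum_PiE[symmetric]) (auto simp: finS)
    also have "\<dots> = 1" using quSum by simp
    also have "1 = sum p Y"
    proof -
      have "sum p Y = prob (F -` Y \<inter> space M)" unfolding p_def
        by (rule sum_fibres[OF finY]) (use measF in auto)
      also have "F -` Y \<inter> space M = space M" unfolding Y_def by auto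
      finally show ?thesis by (simp add: prob_space)
    qed
    finally show ?thesis .
  qed
  have pnn: "0 \<le> p y" for y unfolding p_def by simp
  have g: "- (\<Sum>y\<in>Y. p y * ln (p y)) \<le> - (\<Sum>y\<in>Y. p y * ln (q y))"
  proof (rule gibbs[OF finY pnn _ _ sumq])
    show "0 \<le> q y" for y unfolding q_def qu_def by (auto intro: prod_nonneg)
    show "0 < q y" if "0 < p y" for y
      unfolding q_def using p_le that by (intro prod_pos) (meson less_le_trans)
  qed
  have eq: "(\<Sum>y\<in>Y. p y * ln (q y)) = (\<Sum>u\<in>S. \<Sum>v\<in>UNIV. qu u v * ln (qu u v))"
  proof -
    have "p y * ln (q y) = (\<Sum>u\<in>S. p y * ln (qu u (y u)))" for y
    proof (cases "p y = 0")
      case True then show ?thesis by simp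
    next
      case False then have "p y > 0" using pnn[of y] by simp
      then have "\<forall>u\<in>S. qu u (y u) > 0" using p_le by (meson less_le_trans)
      then have "ln (q y) = (\<Sum>u\<in>S. ln (qu u (y u)))" unfolding q_def
        by (intro ln_prod finS) auto
      then show ?thesis by (simp add: sum_distrib_left)
    qed
    then have "(\<Sum>y\<in>Y. p y * ln (q y)) = (\<Sum>y\<in>Y. \<Sum>u\<in>S. p y * ln (qu u (y u)))" by simp
    also have "\<dots> = (\<Sum>u\<in>S. \<Sum>y\<in>Y. p y * ln (qu u (y u)))" by (rule sum.swap)
    also have "\<dots> = (\<Sum>u\<in>S. \<Sum>v\<in>UNIV. qu u v * ln (qu u v))"
    proof (rule sum.cong[OF refl])
      fix u assume u: "u \<in> S"
      have "(\<Sum>y\<in>Y. p y * ln (qu u (y u))) = (\<Sum>v\<in>UNIV. \<Sum>y\<in>{y\<in>Y. y u = v}. p y * ln (qu u (y u)))"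
        by (rule sum.group[symmetric]) (auto simp: finY)
      also have "\<dots> = (\<Sum>v\<in>UNIV. qu u v * ln (qu u v))"
      proof (rule sum.cong[OF refl])
        fix v
        have "(\<Sum>y\<in>{y\<in>Y. y u = v}. p y * ln (qu u (y u))) = (\<Sum>y\<in>{y\<in>Y. y u = v}. p y) * ln (qu u v)"
          by (simp add: sum_distrib_right)
        also have "(\<Sum>y\<in>{y\<in>Y. y u = v}. p y) = prob (F -` {y\<in>Y. y u = v} \<inter> space M)"
          unfolding p_def by (rule sum_fibres) (use finY measF in auto)
        also have "F -` {y\<in>Y. y u = v} \<inter> space M = \<phi> u -` {v} \<inter> space M"
          using u by (auto simp: F_def Y_def)
        finally show "(\<Sum>y\<in>{y\<in>Y. y u = v}. p y * ln (qu u (y u))) = qu u v * ln (qu u v)"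
          by (simp add: qu_def)
      qed
      finally show "(\<Sum>y\<in>Y. p y * ln (qu u (y u))) = (\<Sum>v\<in>UNIV. qu u v * ln (qu u v))" .
    qed
    finally show ?thesis .
  qed
  have "- (\<Sum>y\<in>Y. p y * ln (p y)) \<le> (\<Sum>u\<in>S. - (\<Sum>v\<in>UNIV. qu u v * ln (qu u v)))"
    using g eq by (simp add: sum_negf)
  then show ?thesis unfolding part_entropy_def by (simp add: p_def Y_def F_def qu_def)
qed

lemma space_full_shift: "space full_shift = UNIV"
  unfolding full_shift_def by (simp add: space_PiM)

lemma local_meas:
  fixes A :: "'a::finite config set"
  assumes finT: "finite T" and loc: "\<And>x y. (\<And>v. v\<in>T \<Longrightarrow> x v = y v) \<Longrightarrow> x \<in> A \<longleftrightarrow> y \<in> A"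
  shows "A \<in> sets full_shift"
proof -
  define W where "W = (\<lambda>x. restrict x T) ` A"
  have "W \<subseteq> PiE T (\<lambda>_. UNIV)" unfolding W_def by auto
  then have finW: "finite W" by (rule finite_subset) (simp add: finite_PiE finT)
  have eqA: "A = (\<Union>w\<in>W. {x. \<forall>v\<in>T. x v = w v})"
  proof safe
    fix x assume "x \<in> A" then show "x \<in> (\<Union>w\<in>W. {x. \<forall>v\<in>T. x v = w v})"
      unfolding W_def by force
  next
    fix x w assume "w \<in> W" "\<forall>v\<in>T. x v = w v"
    then obtain y where y: "y \<in> A" "w = restrict y T" unfolding W_def by auto
    then have "\<And>v. v \<in> T \<Longrightarrow> x v = y v" using \<open>\<forall>v\<in>T. x v = w v\<close> by auto
    then show "x \<in> A" using loc y by blast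
  qed
  have "{x. \<forall>v\<in>T. x v = w v} \<in> sets full_shift" for w :: "'a config"
  proof (cases "T = {}")
    case True then show ?thesis using sets.top[of full_shift] by (simp add: space_full_shift)
  next
    case False
    have s: "{x \<in> space full_shift. x v \<in> {w v}} \<in> sets full_shift" for v
      unfolding full_shift_def by (rule sets_Collect_single) auto
    have "(\<Inter>v\<in>T. {x \<in> space full_shift. x v \<in> {w v}}) \<in> sets full_shift"
      by (rule sets.finite_INT[OF finT False s])
    moreover have "(\<Inter>v\<in>T. {x \<in> space full_shift. x v \<in> {w v}}) = {x. \<forall>v\<in>T. x v = w v}"
      using False by (auto simp: space_full_shift)
    ultimately show ?thesis by simp
  qed
  then show ?thesis by (subst eqA) (intro sets.finite_UN finW, auto)
qed

lemma bin_entropy_nonneg: assumes "0 \<le> e" "e \<le> 1" shows "0 \<le> bin_entropy e"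
proof (cases "e = 0 \<or> e = 1")
  case True then show ?thesis by (auto simp: bin_entropy_def)
next
  case False
  then have e: "0 < e" "e < 1" using assms by auto
  have "e * ln e \<le> 0" using e by (simp add: mult_nonneg_nonpos)
  moreover have "(1 - e) * ln (1 - e) \<le> 0" using e by (simp add: mult_nonneg_nonpos)
  ultimately show ?thesis unfolding bin_entropy_def by simp
qed

lemma bin_entropy_mono:
  assumes "0 \<le> p" "p \<le> e" "e \<le> 1/2"
  shows "bin_entropy p \<le> bin_entropy e"
proof (cases "p = 0")
  case True then show ?thesis using bin_entropy_nonneg[of e] assms by (simp add: bin_entropy_def)
next
  case False
  then have pp: "p > 0" using assms by simp
  define h where "h = (\<lambda>x::real. - x * ln x - (1 - x) * ln (1 - x))"
  have "h p \<le> h e"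
  proof (rule DERIV_nonneg_imp_nondecreasing[OF assms(2)])
    fix x assume x: "p \<le> x" "x \<le> e"
    then have x0: "0 < x" "x < 1" "x \<le> 1 - x" using pp assms by auto
    have "(h has_real_derivative (ln (1 - x) - ln x)) (at x)"
      unfolding h_def using x0 by (auto intro!: derivative_eq_intros)
    moreover have "0 \<le> ln (1 - x) - ln x" using x0 by simp
    ultimately show "\<exists>y. (h has_real_derivative y) (at x) \<and> 0 \<le> y" by blast
  qed
  then show ?thesis using pp assms unfolding h_def bin_entropy_def by auto
qed

lemma divfacts:
  fixes r a :: int
  assumes "0 < r" "0 \<le> a"
  shows "0 \<le> r * (a div r)" "r * (a div r) \<le> a" "a < r * (a div r) + r"
proof -
  have e: "r * (a div r) + a mod r = a" by (rule mult_div_mod_eq)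
  have m: "0 \<le> a mod r" "a mod r < r" using assms by auto
  have "0 \<le> a div r" using assms by (simp add: pos_imp_zdiv_nonneg_iff)
  then show "0 \<le> r * (a div r)" using assms by simp
  show "r * (a div r) \<le> a" "a < r * (a div r) + r" using e m by linarith+
qed

lemma cardA:
  assumes R: "R \<ge> 1"
  shows "R * card {l\<in>{0..int n - int R}. int R dvd l} \<le> n"
proof -
  define r where "r = int R"
  define q where "q = (int n - r) div r"
  have r: "r > 0" using R unfolding r_def by simp
  have sub: "{l\<in>{0..int n - int R}. int R dvd l} \<subseteq> (\<lambda>j. r * j) ` {0..q}"
  proof
    fix l assume l: "l \<in> {l\<in>{0..int n - int R}. int R dvd l}"
    then obtain j where j: "l = r * j" unfolding r_def by (auto elim!: dvdE)
    have "0 \<le> j" using l j r by (simp add: zero_le_mult_iff)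
    moreover have "j \<le> q"
    proof -
      have "(r * j) div r \<le> (int n - r) div r" by (rule zdiv_mono1) (use l j r in \<open>auto simp: r_def\<close>)
      then show ?thesis using r by (simp add: q_def)
    qed
    ultimately show "l \<in> (\<lambda>j. r * j) ` {0..q}" using j by auto
  qed
  have "card {l\<in>{0..int n - int R}. int R dvd l} \<le> card {0..q}"
    by (rule order_trans[OF card_mono[OF _ sub] card_image_le]) auto
  also have "card {0..q} = nat (q + 1)" by simp
  finally have c: "card {l\<in>{0..int n - int R}. int R dvd l} \<le> nat (q + 1)" .
  have "r * nat (q + 1) \<le> int n"
  proof (cases "int n - r < 0")
    case True
    then have "q < 0" unfolding q_def using r by (simp add: div_neg_pos_less0)
    then show ?thesis by simp
  next
    case False
    then have "r * q \<le> int n - r" unfolding q_def using divfacts(2)[OF r, of "int n - r"] by simp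
    moreover have "q \<ge> 0" unfolding q_def using False r by (simp add: pos_imp_zdiv_nonneg_iff)
    ultimately show ?thesis by (simp add: distrib_left)
  qed
  moreover have "r * int (card {l\<in>{0..int n - int R}. int R dvd l}) \<le> r * int (nat (q + 1))"
    using c r by (intro mult_left_mono) auto
  ultimately have "int (R * card {l\<in>{0..int n - int R}. int R dvd l}) \<le> int n"
    unfolding r_def by simp
  then show ?thesis by (simp only: of_nat_le_iff)
qed

lemma comb:
  fixes \<pi> :: "'a \<Rightarrow> 'b::finite" and b :: "'a config \<Rightarrow> bool" and R n :: nat
    and z :: "int \<times> int \<Rightarrow> bool"
  assumes R: "R \<ge> 1"
    and valid: "\<And>x i j. b x \<Longrightarrow> i \<in> {1..int R} \<Longrightarrow> j \<in> {1..int R} \<Longrightarrow> \<pi> (x (i,j)) = \<pi> (x (i,1))"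
  shows "\<exists>C::(int\<times>int) set. finite C \<and>
    card ((\<lambda>x. restrict (\<lambda>s. \<pi> (x s)) (box2 1 (int n))) `
       ((\<lambda>x. restrict (\<lambda>u. b (shift u x)) (box2 0 (int n - int R))) -` {z})) \<le> CARD('b) ^ card C \<and>
    real (card C) \<le> real n ^ 2 / R + real R ^ 2 *
       card {u \<in> box2 0 (int n - int R). int R dvd fst u \<and> int R dvd snd u \<and> \<not> z u} + 2 * R * n"
proof -
  define r where "r = int R"
  have r: "r > 0" using R unfolding r_def by simp
  define S where "S = box2 0 (int n - r)"
  define Bx where "Bx = box2 1 (int n)"
  define f where "f = (\<lambda>x::'a config. restrict (\<lambda>s. \<pi> (x s)) Bx)"
  define g where "g = (\<lambda>x::'a config. restrict (\<lambda>u. b (shift u x)) S)"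
  define kf where "kf = (\<lambda>s::int\<times>int. r * ((fst s - 1) div r))"
  define lf where "lf = (\<lambda>s::int\<times>int. r * ((snd s - 1) div r))"
  define rep where "rep = (\<lambda>s. if (kf s, lf s) \<in> S \<and> z (kf s, lf s) then (fst s, lf s + 1) else s)"
  define bad where "bad = {u \<in> S. r dvd fst u \<and> r dvd snd u \<and> \<not> z u}"
  define A where "A = {l\<in>{0..int n - r}. r dvd l}"
  define C where "C = rep ` Bx"
  have finBx: "finite Bx" unfolding Bx_def box2_def by simp
  have finC: "finite C" unfolding C_def using finBx by simp
  have kfacts: "0 \<le> kf s" "kf s \<le> fst s - 1" "fst s - 1 < kf s + r"
    "0 \<le> lf s" "lf s \<le> snd s - 1" "snd s - 1 < lf s + r" if "s \<in> Bx" for s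
    using that divfacts[OF r, of "fst s - 1"] divfacts[OF r, of "snd s - 1"]
    unfolding kf_def lf_def Bx_def box2_def by (auto simp: mem_Times_iff)
  have valid_rep: "\<pi> (x (rep s)) = \<pi> (x s)" if x: "g x = z" and s: "s \<in> Bx" for x s
  proof (cases "(kf s, lf s) \<in> S \<and> z (kf s, lf s)")
    case True
    define u where "u = (kf s, lf s)"
    have "g x u = b (shift u x)" using True unfolding g_def u_def by simp
    then have bu: "b (shift u x)" using True x unfolding u_def by simp
    have i: "fst s - kf s \<in> {1..int R}" and j: "snd s - lf s \<in> {1..int R}"
      using kfacts[OF s] unfolding r_def by auto
    have "\<pi> (shift u x (fst s - kf s, snd s - lf s)) = \<pi> (shift u x (fst s - kf s, 1))"
      by (rule valid[OF bu i j])
    then show ?thesis using True unfolding rep_def u_def shift_def vadd_def by simp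
  qed (auto simp: rep_def)
  define \<Phi> where "\<Phi> = (\<lambda>w::int\<times>int \<Rightarrow> 'b. restrict (\<lambda>s. w (rep s)) Bx)"
  have sub1: "f ` (g -` {z}) \<subseteq> \<Phi> ` (PiE C (\<lambda>_. UNIV))"
  proof
    fix y assume "y \<in> f ` (g -` {z})"
    then obtain x where x: "g x = z" "y = f x" by auto
    have "f x = \<Phi> (restrict (\<lambda>c. \<pi> (x c)) C)"
    proof
      fix s show "f x s = \<Phi> (restrict (\<lambda>c. \<pi> (x c)) C) s"
        using valid_rep[OF x(1)] unfolding f_def \<Phi>_def C_def by auto
    qed
    then show "y \<in> \<Phi> ` (PiE C (\<lambda>_. UNIV))" using x by auto
  qed
  have card1: "card (f ` (g -` {z})) \<le> CARD('b) ^ card C"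
  proof -
    have "card (f ` (g -` {z})) \<le> card (\<Phi> ` (PiE C (\<lambda>_. UNIV)))"
      by (rule card_mono[OF _ sub1]) (simp add: finite_PiE finC)
    also have "\<dots> \<le> card (PiE C (\<lambda>_. UNIV::'b set))" by (rule card_image_le) (simp add: finite_PiE finC)
    also have "\<dots> = CARD('b) ^ card C" by (simp add: card_PiE finC)
    finally show ?thesis .
  qed
  define C1 where "C1 = {1..int n} \<times> ((\<lambda>l. l + 1) ` A)"
  define blk where "blk = (\<lambda>u::int\<times>int. {fst u + 1..fst u + r} \<times> {snd u + 1..snd u + r})"
  define C2 where "C2 = (\<Union>u\<in>bad. blk u)"
  define C3 where "C3 = {int n - r + 2..int n} \<times> {1..int n} \<union> {1..int n} \<times> {int n - r + 2..int n}"
  have subC: "C \<subseteq> C1 \<union> C2 \<union> C3"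
  proof
    fix c assume "c \<in> C"
    then obtain s where s: "s \<in> Bx" "c = rep s" unfolding C_def by auto
    note kk = kfacts[OF s(1)]
    show "c \<in> C1 \<union> C2 \<union> C3"
    proof (cases "(kf s, lf s) \<in> S")
      case inS: True
      show ?thesis
      proof (cases "z (kf s, lf s)")
        case True
        then have "c = (fst s, lf s + 1)" using inS s unfolding rep_def by simp
        moreover have "lf s \<in> A" using inS unfolding A_def S_def box2_def lf_def by auto
        moreover have "fst s \<in> {1..int n}" using s unfolding Bx_def box2_def by (auto simp: mem_Times_iff)
        ultimately show ?thesis unfolding C1_def by auto
      next
        case False
        then have "c = s" using s unfolding rep_def by simp
        moreover have "(kf s, lf s) \<in> bad" using inS False unfolding bad_def kf_def lf_def by auto
        moreover have "s \<in> blk (kf s, lf s)" using kk unfolding blk_def by (auto simp: mem_Times_iff)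
        ultimately show ?thesis unfolding C2_def by auto
      qed
    next
      case False
      then have "c = s" using s unfolding rep_def by simp
      moreover have "kf s > int n - r \<or> lf s > int n - r" using False kk unfolding S_def box2_def by auto
      then have "fst s \<ge> int n - r + 2 \<or> snd s \<ge> int n - r + 2" using kk by auto
      ultimately show ?thesis using s(1) unfolding C3_def Bx_def box2_def by (auto simp: mem_Times_iff)
    qed
  qed
  have finA: "finite A" unfolding A_def by (rule finite_subset[of _ "{0..int n - r}"]) auto
  have cC1: "card C1 = n * card A" unfolding C1_def
    by (simp add: card_cartesian_product card_image inj_on_def)
  have cC2: "card C2 \<le> card bad * (R * R)"
  proof -
    have "card C2 \<le> (\<Sum>u\<in>bad. card (blk u))" unfolding C2_def by (rule card_UN_le) (simp add: bad_def S_def box2_def)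
    also have "\<dots> = card bad * (R * R)" unfolding blk_def by (simp add: card_cartesian_product r_def)
    finally show ?thesis .
  qed
  have cC3: "card C3 \<le> (R - 1) * n + n * (R - 1)"
  proof -
    have "card C3 \<le> card ({int n - r + 2..int n} \<times> {1..int n}) + card ({1..int n} \<times> {int n - r + 2..int n})"
      unfolding C3_def by (rule card_Un_le)
    also have "\<dots> = (R - 1) * n + n * (R - 1)" using R
      by (simp add: card_cartesian_product r_def nat_diff_distrib)
    finally show ?thesis .
  qed
  have finC123: "finite (C1 \<union> C2 \<union> C3)" unfolding C1_def C2_def C3_def blk_def bad_def S_def box2_def
    using finA by auto
  have "card C \<le> card C1 + card C2 + card C3"
    using card_mono[OF finC123 subC] card_Un_le[of "C1 \<union> C2" C3] card_Un_le[of C1 C2] by linarith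
  then have cCn: "card C \<le> n * card A + card bad * (R * R) + ((R - 1) * n + n * (R - 1))"
    using cC1 cC2 cC3 by linarith
  have cC: "real (card C) \<le> real n * real (card A) + real R ^ 2 * real (card bad) + real ((R - 1) * n + n * (R - 1))"
  proof -
    have "real (card C) \<le> real (n * card A + card bad * (R * R) + ((R - 1) * n + n * (R - 1)))"
      using cCn by (simp only: of_nat_le_iff)
    also have "\<dots> = real n * real (card A) + real R ^ 2 * real (card bad) + real ((R - 1) * n + n * (R - 1))"
      by (simp only: of_nat_add of_nat_mult power2_eq_square mult.commute)
    finally show ?thesis .
  qed
  have RA: "R * card A \<le> n" using cardA[OF R, of n] unfolding A_def r_def .
  have "real n * card A \<le> real n ^ 2 / R"
  proof -
    have "real R * card A \<le> n" using RA by (metis of_nat_le_iff of_nat_mult)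
    then have "real n * (real R * card A) \<le> real n * n" by (simp add: mult_left_mono)
    then show ?thesis using R by (simp add: field_simps power2_eq_square)
  qed
  moreover have "real ((R - 1) * n + n * (R - 1)) \<le> 2 * real R * real n"
  proof -
    have "(R - 1) * n \<le> R * n" by simp
    moreover have "n * (R - 1) = (R - 1) * n" by simp
    moreover have "R * n + R * n = 2 * R * n" by simp
    ultimately have "(R - 1) * n + n * (R - 1) \<le> 2 * R * n" by linarith
    then have "real ((R - 1) * n + n * (R - 1)) \<le> real (2 * R * n)" by (simp only: of_nat_le_iff)
    then show ?thesis by simp
  qed
  moreover have "real (2 * R * n) = 2 * real R * real n" by simp
  ultimately have "real (card C) \<le> real n ^ 2 / R + real R ^ 2 * card bad + 2 * R * n"
    using cC \<open>real (2 * R * n) = 2 * real R * real n\<close> by linarith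
  then have "finite C \<and> card (f ` (g -` {z})) \<le> CARD('b) ^ card C \<and>
     real (card C) \<le> real n ^ 2 / R + real R ^ 2 * card bad + 2 * R * n"
    using finC card1 by (intro conjI)
  then have "\<exists>C::(int\<times>int) set. finite C \<and> card (f ` (g -` {z})) \<le> CARD('b) ^ card C \<and>
     real (card C) \<le> real n ^ 2 / R + real R ^ 2 * card bad + 2 * R * n" by (rule exI[of _ C])
  then show ?thesis unfolding f_def g_def Bx_def bad_def S_def r_def .
qed

theorem lemma2p4:
  fixes \<pi> :: "'a::finite \<Rightarrow> 'b::finite"
    and D R :: nat and F M :: "'a config set"
    and \<mu> :: "'a config measure" and \<epsilon> :: real
  assumes D: "D \<ge> 1" and RD: "R \<ge> D"
    and F: "F \<subseteq> patterns D"
    and M: "M = {w. locally_admissible F D R w}"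
    and valign: "\<forall>w \<in> M. \<forall>i \<in> {1..int R}. \<forall>j \<in> {1..int R}. \<forall>j' \<in> {1..int R}.
                   \<pi> (w (i, j)) = \<pi> (w (i, j'))"
    and prob: "prob_space \<mu>" and sets_mu: "sets \<mu> = sets full_shift"
    and inv: "shift_invariant \<mu>" and erg: "ergodic \<mu>"
    and eps: "0 \<le> \<epsilon>" "\<epsilon> \<le> 1/2"
    and small: "measure \<mu> (space \<mu> - cyl R M) \<le> \<epsilon>"
  shows "limsup (\<lambda>n::nat. ereal (part_entropy \<mu>
            (join_part (\<lambda>x. x \<in> cyl R M) (box2 0 (int n - int R))) / (real n)^2))
           \<le> ereal (bin_entropy \<epsilon>) \<and>
         limsup (\<lambda>n::nat. ereal (cond_part_entropy \<mu>
            (join_part (\<lambda>x. \<pi> (x (0,0))) (box2 1 (int n)))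
            (join_part (\<lambda>x. x \<in> cyl R M) (box2 0 (int n - int R))) / (real n)^2))
           \<le> ereal ((8 / real R + \<epsilon>) * ln (real CARD('b)))"
proof -
  interpret P: prob_space \<mu> by (rule prob)
  have sp: "space \<mu> = UNIV" using sets_eq_imp_space_eq[OF sets_mu] space_full_shift by simp
  have R1: "R \<ge> 1" using D RD by simp
  define b where "b = (\<lambda>x::'a config. x \<in> cyl R M)"
  have bloc: "b x = b y" if "\<And>v. v \<in> box2 1 (int R) \<Longrightarrow> x v = y v" for x y
  proof -
    have "restrict x (box2 1 (int R)) = restrict y (box2 1 (int R))" by (rule restrict_ext) (use that in auto)
    then show ?thesis unfolding b_def cyl_def by simp
  qed
  have locm: "A \<in> sets \<mu>" if "finite T" "\<And>x y. (\<And>v. v\<in>T \<Longrightarrow> x v = y v) \<Longrightarrow> x \<in> A \<longleftrightarrow> y \<in> A"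
    for A :: "'a config set" and T
    using local_meas[OF that] sets_mu by simp
  have finbox: "finite (box2 a c)" for a c unfolding box2_def by simp
  have bpre: "b -` V \<in> sets \<mu>" for V
    by (rule locm[OF finbox[of 1 "int R"]]) (use bloc in blast)
  have inv_prob: "P.prob (shift u -` A) = P.prob A" if "A \<in> sets \<mu>" for u A
  proof -
    have "emeasure \<mu> (shift u -` A \<inter> space \<mu>) = emeasure \<mu> A" using inv that unfolding shift_invariant_def by blast
    then show ?thesis using sp by (simp add: measure_def)
  qed
  define p where "p = P.prob (b -` {False})"
  have p_eps: "p \<le> \<epsilon>"
  proof -
    have "space \<mu> - cyl R M = b -` {False}" using sp unfolding b_def by auto
    then show ?thesis using small unfolding p_def by simp
  qed
  have p0: "0 \<le> p" unfolding p_def by simp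
  have pshift: "P.prob ((\<lambda>x. b (shift u x)) -` {v} \<inter> space \<mu>) = P.prob (b -` {v})" for u v
  proof -
    have "(\<lambda>x. b (shift u x)) -` {v} \<inter> space \<mu> = shift u -` (b -` {v})" using sp by auto
    then show ?thesis using inv_prob[OF bpre] by simp
  qed
  have ptrue: "P.prob (b -` {True}) = 1 - p"
  proof -
    have "b -` {True} = space \<mu> - b -` {False}" using sp by auto
    then show ?thesis unfolding p_def using P.prob_compl[OF bpre[of "{False}"]] by simp
  qed
  have gloc: "restrict (\<lambda>u. b (shift u x)) (box2 0 (int n - int R)) = restrict (\<lambda>u. b (shift u y)) (box2 0 (int n - int R))"
    if "\<And>v. v \<in> box2 1 (int n) \<Longrightarrow> x v = y v" for x y n
  proof (rule restrict_ext)
    fix u assume u: "u \<in> box2 0 (int n - int R)"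
    show "b (shift u x) = b (shift u y)"
    proof (rule bloc)
      fix v assume "v \<in> box2 1 (int R)"
      then have "vadd u v \<in> box2 1 (int n)" using u unfolding box2_def vadd_def by (auto simp: mem_Times_iff)
      then show "shift u x v = shift u y v" unfolding shift_def using that by simp
    qed
  qed
  have jp: "join_part (\<lambda>x. x \<in> cyl R M) S = (\<lambda>x. restrict (\<lambda>u. b (shift u x)) S)" for S
    unfolding join_part_def b_def ..
  have part1: "part_entropy \<mu> (join_part (\<lambda>x. x \<in> cyl R M) (box2 0 (int n - int R))) \<le> real n ^ 2 * bin_entropy \<epsilon>" for n
  proof -
    define S where "S = box2 0 (int n - int R)"
    have "part_entropy \<mu> (\<lambda>x. restrict (\<lambda>u. b (shift u x)) S) \<le> (\<Sum>u\<in>S. - (\<Sum>v\<in>UNIV.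
            P.prob ((\<lambda>x. b (shift u x)) -` {v} \<inter> space \<mu>) * ln (P.prob ((\<lambda>x. b (shift u x)) -` {v} \<inter> space \<mu>))))"
    proof (rule P.join_bound)
      show "finite S" unfolding S_def by (rule finbox)
      show "(\<lambda>x. restrict (\<lambda>u. b (shift u x)) S) -` A \<inter> space \<mu> \<in> P.events" for A
      proof -
        have "(\<lambda>x. restrict (\<lambda>u. b (shift u x)) S) -` A \<in> sets \<mu>"
        proof (rule locm[OF finbox[of 1 "int n"]])
          fix x y :: "'a config" assume "\<And>v. v \<in> box2 1 (int n) \<Longrightarrow> x v = y v"
          from gloc[OF this] show "x \<in> (\<lambda>x. restrict (\<lambda>u. b (shift u x)) S) -` A \<longleftrightarrow>
              y \<in> (\<lambda>x. restrict (\<lambda>u. b (shift u x)) S) -` A" unfolding S_def by simp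
        qed
        then show ?thesis using sp by simp
      qed
    qed
    also have "\<dots> = (\<Sum>u\<in>S. bin_entropy p)"
    proof (rule sum.cong[OF refl])
      fix u
      have "- (\<Sum>v\<in>UNIV. P.prob ((\<lambda>x. b (shift u x)) -` {v} \<inter> space \<mu>) *
              ln (P.prob ((\<lambda>x. b (shift u x)) -` {v} \<inter> space \<mu>)))
          = - ((1 - p) * ln (1 - p) + p * ln p)"
        by (simp add: pshift UNIV_bool ptrue p_def[symmetric])
      also have "\<dots> = bin_entropy p" unfolding bin_entropy_def by auto
      finally show "- (\<Sum>v\<in>UNIV. P.prob ((\<lambda>x. b (shift u x)) -` {v} \<inter> space \<mu>) *
              ln (P.prob ((\<lambda>x. b (shift u x)) -` {v} \<inter> space \<mu>))) = bin_entropy p" .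
    qed
    also have "\<dots> = card S * bin_entropy p" by simp
    also have "\<dots> \<le> real n ^ 2 * bin_entropy \<epsilon>"
    proof (rule mult_mono)
      have "card S = nat (int n - int R + 1) * nat (int n - int R + 1)"
        unfolding S_def box2_def by (simp add: card_cartesian_product)
      also have "\<dots> \<le> n * n" using R1 by (intro mult_mono) auto
      finally show "real (card S) \<le> real n ^ 2" by (metis of_nat_le_iff of_nat_mult power2_eq_square of_nat_power)
      show "bin_entropy p \<le> bin_entropy \<epsilon>" by (rule bin_entropy_mono[OF p0 p_eps eps(2)])
      show "0 \<le> real n ^ 2" by simp
      show "0 \<le> bin_entropy p" using eps p0 p_eps by (intro bin_entropy_nonneg) auto
    qed
    finally show ?thesis unfolding jp S_def .
  qed
  have goal1: "limsup (\<lambda>n::nat. ereal (part_entropy \<mu>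
            (join_part (\<lambda>x. x \<in> cyl R M) (box2 0 (int n - int R))) / (real n)^2))
           \<le> ereal (bin_entropy \<epsilon>)"
  proof (rule Limsup_bounded, rule always_eventually, rule allI)
    fix n :: nat
    have be: "0 \<le> bin_entropy \<epsilon>" using eps by (intro bin_entropy_nonneg) auto
    show "ereal (part_entropy \<mu> (join_part (\<lambda>x. x \<in> cyl R M) (box2 0 (int n - int R))) / (real n)^2)
        \<le> ereal (bin_entropy \<epsilon>)"
    proof (cases "n = 0")
      case True then show ?thesis using be by simp
    next
      case False
      then have "real n ^ 2 > 0" by simp
      then show ?thesis using part1[of n] by (simp add: divide_le_eq mult.commute)
    qed
  qed

  define L where "L = ln (real CARD('b))"
  have L0: "0 \<le> L" unfolding L_def by (simp add: Suc_leI)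
  have valid: "\<pi> (x (i,j)) = \<pi> (x (i,1))" if "b x" "i \<in> {1..int R}" "j \<in> {1..int R}" for x i j
  proof -
    have w: "restrict x (box2 1 (int R)) \<in> M" using that(1) unfolding b_def cyl_def by simp
    have one: "(1::int) \<in> {1..int R}" using R1 by simp
    have "\<pi> (restrict x (box2 1 (int R)) (i,j)) = \<pi> (restrict x (box2 1 (int R)) (i,1))"
      using valign w that(2,3) one by blast
    then show ?thesis using that(2,3) one by (simp add: box2_def)
  qed
  have part2: "cond_part_entropy \<mu> (join_part (\<lambda>x. \<pi> (x (0,0))) (box2 1 (int n)))
      (join_part (\<lambda>x. x \<in> cyl R M) (box2 0 (int n - int R)))
     \<le> L * (real n ^ 2 / R + real n ^ 2 * \<epsilon> + 2 * R * n)" for n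
  proof -
    define S where "S = box2 0 (int n - int R)"
    define Bx where "Bx = box2 1 (int n)"
    define f where "f = (\<lambda>x::'a config. restrict (\<lambda>s. \<pi> (x s)) Bx)"
    define g where "g = (\<lambda>x::'a config. restrict (\<lambda>u. b (shift u x)) S)"
    define G where "G = {u \<in> S. int R dvd fst u \<and> int R dvd snd u}"
    define Pz where "Pz = (\<lambda>z. P.prob (g -` {z}))"
    define Z where "Z = g ` UNIV"
    define bad where "bad = (\<lambda>z::int\<times>int\<Rightarrow>bool. card {u \<in> S. int R dvd fst u \<and> int R dvd snd u \<and> \<not> z u})"
    have jf: "join_part (\<lambda>x. \<pi> (x (0,0))) Bx = f" unfolding join_part_def f_def shift_def vadd_def by simp
    have jg: "join_part (\<lambda>x. x \<in> cyl R M) S = g" unfolding jp g_def ..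
    have fgloc: "f x = f y \<and> g x = g y" if "\<And>v. v \<in> Bx \<Longrightarrow> x v = y v" for x y
    proof
      show "f x = f y" unfolding f_def by (rule restrict_ext) (use that in auto)
      show "g x = g y" unfolding g_def S_def using gloc[of n x y] that unfolding Bx_def by blast
    qed
    have measfg: "(\<lambda>x. (f x, g x)) -` A \<in> sets \<mu>" for A
    proof (rule locm[of Bx])
      show "finite Bx" unfolding Bx_def by (rule finbox)
      fix x y :: "'a config" assume "\<And>v. v \<in> Bx \<Longrightarrow> x v = y v"
      from fgloc[OF this] show "x \<in> (\<lambda>x. (f x, g x)) -` A \<longleftrightarrow> y \<in> (\<lambda>x. (f x, g x)) -` A" by simp
    qed
    have measg: "g -` V \<in> sets \<mu>" for V
    proof -
      have "g -` V = (\<lambda>x. (f x, g x)) -` (UNIV \<times> V)" by auto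
      then show ?thesis using measfg by simp
    qed
    have finS: "finite S" unfolding S_def by (rule finbox)
    have finBx: "finite Bx" unfolding Bx_def by (rule finbox)
    have finf: "finite (f ` UNIV)"
      by (rule finite_subset[of _ "PiE Bx (\<lambda>_. UNIV)"]) (auto simp: f_def finite_PiE finBx)
    have fing: "finite (g ` UNIV)"
      by (rule finite_subset[of _ "PiE S (\<lambda>_. UNIV)"]) (auto simp: g_def finite_PiE finS)
    have H1: "cond_part_entropy \<mu> f g \<le> (\<Sum>z\<in>g ` space \<mu>. P.prob (g -` {z} \<inter> space \<mu>) *
            ln (card (f ` (g -` {z} \<inter> space \<mu>))))"
    proof (rule P.cond_bound)
      show "finite (f ` space \<mu>)" using finf sp by simp
      show "finite (g ` space \<mu>)" using fing sp by simp
      show "f -` {y} \<inter> (g -` {z} \<inter> space \<mu>) \<in> P.events" for y z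
      proof -
        have "f -` {y} \<inter> (g -` {z} \<inter> space \<mu>) = (\<lambda>x. (f x, g x)) -` {(y,z)}" using sp by auto
        then show ?thesis using measfg by simp
      qed
      show "g -` {z} \<inter> space \<mu> \<in> P.events" for z using measg sp by simp
    qed
    then have H1': "cond_part_entropy \<mu> f g \<le> (\<Sum>z\<in>Z. Pz z * ln (card (f ` (g -` {z}))))"
      using sp unfolding Z_def Pz_def by simp
    have Pz0: "0 \<le> Pz z" for z unfolding Pz_def by simp
    have H2: "ln (card (f ` (g -` {z}))) \<le> L * (real n ^ 2 / R + real R ^ 2 * bad z + 2 * R * n)"
      if z: "z \<in> Z" for z
    proof -
      obtain C :: "(int \<times> int) set" where C: "finite C" "card (f ` (g -` {z})) \<le> CARD('b) ^ card C"
        "real (card C) \<le> real n ^ 2 / R + real R ^ 2 * bad z + 2 * R * n"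
        using comb[where \<pi>=\<pi> and b=b and n=n and z=z, OF R1 valid] unfolding f_def g_def Bx_def S_def bad_def by blast
      have ne: "f ` (g -` {z}) \<noteq> {}" using z unfolding Z_def by auto
      have fin: "finite (f ` (g -` {z}))" by (rule finite_subset[OF _ finf]) auto
      have pos: "0 < card (f ` (g -` {z}))" using ne fin by (simp add: card_gt_0_iff)
      have "ln (card (f ` (g -` {z}))) \<le> ln (real (CARD('b) ^ card C))"
        using pos C(2) by (subst ln_le_cancel_iff) (auto simp: of_nat_le_iff[symmetric] simp del: of_nat_le_iff)
      also have "\<dots> = card C * L" unfolding L_def by (simp add: ln_realpow)
      also have "\<dots> \<le> (real n ^ 2 / R + real R ^ 2 * bad z + 2 * R * n) * L"
        using C(3) L0 by (rule mult_right_mono)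
      finally show ?thesis by (simp add: mult.commute)
    qed
    have finZ: "finite Z" using fing unfolding Z_def .
    have sumPz: "(\<Sum>z\<in>Z. Pz z) = 1"
    proof -
      have "(\<Sum>z\<in>Z. Pz z) = P.prob (g -` Z \<inter> UNIV)" unfolding Pz_def
        using P.sum_fibres[OF finZ, of g UNIV] measg by simp
      moreover have "g -` Z \<inter> UNIV = space \<mu>" unfolding Z_def using sp by auto
      ultimately show ?thesis using P.prob_space by simp
    qed
    have sumbad: "(\<Sum>z\<in>Z. Pz z * real (bad z)) = card G * p"
    proof -
      have bz: "real (bad z) = (\<Sum>u\<in>G. if z u then 0 else 1)" for z
      proof -
        have "bad z = card {u\<in>G. \<not> z u}" unfolding bad_def G_def by (rule arg_cong[of _ _ card]) auto
        also have "\<dots> = (\<Sum>u\<in>{u\<in>G. \<not> z u}. 1)" by simp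
        also have "\<dots> = (\<Sum>u\<in>G. if \<not> z u then 1 else 0)"
          by (rule sum.inter_filter) (simp add: G_def finS)
        finally have "real (bad z) = (\<Sum>u\<in>G. real (if \<not> z u then 1 else 0))" by simp
        then show ?thesis by (simp add: if_distrib) (rule sum.cong; auto)
      qed
      have "(\<Sum>z\<in>Z. Pz z * real (bad z)) = (\<Sum>z\<in>Z. \<Sum>u\<in>G. if \<not> z u then Pz z else 0)"
        by (simp add: bz sum_distrib_left if_distrib) (intro sum.cong refl; simp)
      also have "\<dots> = (\<Sum>u\<in>G. \<Sum>z\<in>Z. if \<not> z u then Pz z else 0)" by (rule sum.swap)
      also have "\<dots> = (\<Sum>u\<in>G. p)"
      proof (rule sum.cong[OF refl])
        fix u assume u: "u \<in> G"
        have "(\<Sum>z\<in>Z. if \<not> z u then Pz z else 0) = (\<Sum>z\<in>{z\<in>Z. \<not> z u}. Pz z)"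
          by (rule sum.inter_filter[symmetric]) (rule finZ)
        also have "\<dots> = P.prob (g -` {z\<in>Z. \<not> z u} \<inter> UNIV)" unfolding Pz_def
          using P.sum_fibres[of "{z\<in>Z. \<not> z u}" g UNIV] finZ measg by simp
        also have "g -` {z\<in>Z. \<not> z u} \<inter> UNIV = (\<lambda>x. b (shift u x)) -` {False} \<inter> space \<mu>"
          using u sp unfolding G_def g_def Z_def by auto
        also have "P.prob \<dots> = p" unfolding p_def by (rule pshift)
        finally show "(\<Sum>z\<in>Z. if \<not> z u then Pz z else 0) = p" .
      qed
      finally show ?thesis by simp
    qed
    have cardG: "real R ^ 2 * card G \<le> real n ^ 2"
    proof -
      define A where "A = {l\<in>{0..int n - int R}. int R dvd l}"
      have "G = A \<times> A" unfolding G_def A_def S_def box2_def by auto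
      then have "card G = card A * card A" by (simp add: card_cartesian_product)
      have "R * card A \<le> n" using cardA[OF R1, of n] unfolding A_def .
      then have "real R * card A \<le> n" by (metis of_nat_le_iff of_nat_mult)
      then have m: "(real R * card A) * (real R * card A) \<le> real n * real n"
        by (intro mult_mono) auto
      have "real R ^ 2 * card G = (real R * card A) * (real R * card A)"
        using \<open>card G = card A * card A\<close> by (simp add: power2_eq_square algebra_simps)
      moreover have "real n ^ 2 = real n * real n" by (simp add: power2_eq_square)
      ultimately show ?thesis using m by linarith
    qed
    have "cond_part_entropy \<mu> f g \<le> (\<Sum>z\<in>Z. Pz z * (L * (real n ^ 2 / R + real R ^ 2 * bad z + 2 * R * n)))"
      using H1' H2 Pz0 by (smt (verit) mult_left_mono sum_mono)
    also have "\<dots> = L * (real n ^ 2 / R + 2 * R * n) * (\<Sum>z\<in>Z. Pz z) + L * real R ^ 2 * (\<Sum>z\<in>Z. Pz z * real (bad z))"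
    proof -
      have eqt: "Pz z * (L * (real n ^ 2 / R + real R ^ 2 * bad z + 2 * R * n)) =
          L * (real n ^ 2 / R + 2 * R * n) * Pz z + L * real R ^ 2 * (Pz z * real (bad z))" for z
        by (simp add: algebra_simps)
      show ?thesis by (simp only: eqt sum.distrib sum_distrib_left[symmetric])
    qed
    also have "\<dots> = L * (real n ^ 2 / R + 2 * R * n) + L * (real R ^ 2 * card G * p)"
      using sumPz sumbad by (simp add: algebra_simps)
    also have "\<dots> \<le> L * (real n ^ 2 / R + 2 * R * n) + L * (real n ^ 2 * \<epsilon>)"
    proof -
      have "real R ^ 2 * card G * p \<le> real n ^ 2 * \<epsilon>"
        using cardG p0 p_eps by (intro mult_mono) auto
      then show ?thesis using L0 by (simp add: mult_left_mono)
    qed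
    also have "\<dots> = L * (real n ^ 2 / R + real n ^ 2 * \<epsilon> + 2 * R * n)" by (simp add: algebra_simps)
    finally show ?thesis unfolding jf[symmetric] jg[symmetric] Bx_def S_def .
  qed
  have goal2: "limsup (\<lambda>n::nat. ereal (cond_part_entropy \<mu>
            (join_part (\<lambda>x. \<pi> (x (0,0))) (box2 1 (int n)))
            (join_part (\<lambda>x. x \<in> cyl R M) (box2 0 (int n - int R))) / (real n)^2))
           \<le> ereal ((8 / real R + \<epsilon>) * ln (real CARD('b)))"
  proof (rule Limsup_bounded)
    show "\<forall>\<^sub>F n in sequentially. ereal (cond_part_entropy \<mu>
            (join_part (\<lambda>x. \<pi> (x (0,0))) (box2 1 (int n)))
            (join_part (\<lambda>x. x \<in> cyl R M) (box2 0 (int n - int R))) / (real n)^2)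
           \<le> ereal ((8 / real R + \<epsilon>) * ln (real CARD('b)))"
      unfolding eventually_sequentially
    proof (intro exI allI impI)
      fix n :: nat assume n: "R * R + 1 \<le> n"
      have Rp: "real R > 0" using R1 by simp
      have np: "real n > 0" using n by simp
      have "R * R \<le> n" using n by simp
      then have "real (R * R) \<le> real n" by (simp only: of_nat_le_iff)
      then have rr: "real R * real R \<le> real n" by simp
      have "(real R * real R) * real n \<le> real n * real n"
        by (rule mult_right_mono[OF rr]) simp
      moreover have "2 * real R * real n * real R = 2 * ((real R * real R) * real n)" by (simp add: algebra_simps)
      moreover have "0 \<le> real n * real n" by simp
      ultimately have "2 * real R * real n * real R \<le> 7 * real n * real n" by linarith
      then have "2 * real R * real n * real R \<le> 7 * real n ^ 2" by (simp add: power2_eq_square)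
      then have k: "2 * real R * real n \<le> 7 * real n ^ 2 / real R"
        by (simp add: pos_le_divide_eq[OF Rp])
      have e2: "real (2 * R * n) = 2 * real R * real n" by simp
      have "real n ^ 2 / R + real n ^ 2 * \<epsilon> + 2 * R * n \<le> real n ^ 2 / R + real n ^ 2 * \<epsilon> + 7 * real n ^ 2 / real R"
        using k e2 by linarith
      then have "L * (real n ^ 2 / R + real n ^ 2 * \<epsilon> + 2 * R * n) \<le> L * (real n ^ 2 / R + real n ^ 2 * \<epsilon> + 7 * real n ^ 2 / real R)"
        by (rule mult_left_mono) (rule L0)
      then have "cond_part_entropy \<mu> (join_part (\<lambda>x. \<pi> (x (0,0))) (box2 1 (int n)))
        (join_part (\<lambda>x. x \<in> cyl R M) (box2 0 (int n - int R)))
         \<le> L * (real n ^ 2 / R + real n ^ 2 * \<epsilon> + 7 * real n ^ 2 / real R)"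
        using part2[of n] by linarith
      also have "\<dots> = (8 / real R + \<epsilon>) * L * real n ^ 2"
        using Rp by (simp add: field_simps)
      finally have "cond_part_entropy \<mu> (join_part (\<lambda>x. \<pi> (x (0,0))) (box2 1 (int n)))
        (join_part (\<lambda>x. x \<in> cyl R M) (box2 0 (int n - int R))) / real n ^ 2 \<le> (8 / real R + \<epsilon>) * L"
        using np by (simp add: divide_le_eq)
      then show "ereal (cond_part_entropy \<mu> (join_part (\<lambda>x. \<pi> (x (0,0))) (box2 1 (int n)))
        (join_part (\<lambda>x. x \<in> cyl R M) (box2 0 (int n - int R))) / (real n)^2)
           \<le> ereal ((8 / real R + \<epsilon>) * ln (real CARD('b)))" unfolding L_def by simp
    qed
  qed
  show ?thesis using goal1 goal2 by blast
qed

end
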